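(* For every unit interval graph $G$ on $[n]$, $$Y_G=\sum_{D\in\mathcal A(G)}(-1)^{a(D)}\,e_1\uparrow_D .$$
   Context: Work in $\mathrm{NCSym}$ (symmetric functions in non-commuting variables $x_1,x_2,\dots$ over $\mathbb Q$); $e_1=p_1=x_1+x_2+\cdots$. A unit interval graph $G$ on $[n]$ is given by intervals $[a_1,1],\dots,[a_n,n]$ with $1\le a_1\le\cdots\le a_n$, $a_k\le k$; it has an edge between distinct $i,j$ whenever $i,j\in[a_k,k]$ for some $k$. $Y_G=\sum_\kappa x_{\kappa(1)}\cdots x_{\kappa(n)}$ over proper colorings $\kappa:[n]\to\{1,2,\dots\}$. Inducing: for $1\le j\le m-1$, $x_{i_1}\cdots x_{i_{m-1}}\uparrow_j^m=x_{i_1}\cdots x_{i_{m-1}}x_{i_j}$, extended linearly to homogeneous degree $m-1$ elements, and $f\uparrow_m^m=f\,p_1$. An arc diagram on $[n]$ is a set of arcs $(i,j)$ with $1\le i<j\le n$ such that each vertex $j$ is the right endpoint of at most one arc (its left arc). $\mathcal A(G)$ is the set of arc diagrams on $[n]$ all of whose arcs $(i,j)$ satisfy $i,j\in[a_k,k]$ for some $k$. For $D\in\mathcal A(G)$ let $a(D)$ be its number of arcs, and for $2\le j\le n$ let $i_j$ be the left endpoint of the left arc of $j$ if it exists, and $i_j=j$ otherwise; then $e_1\uparrow_D=e_1\uparrow_{i_2}^2\uparrow_{i_3}^3\cdots\uparrow_{i_n}^n$ (inducings applied successively from left to right). *)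

theory Defs
  imports Complex_Main
begin

text \<open>A homogeneous element of NCSym (a formal series in non-commuting variables
x_1, x_2, ...) is represented by its coefficient function on words: a word
x_{w_1} ... x_{w_m} is the list [w_1, ..., w_m] of positive naturals.
Coefficients of lists containing 0 (no variable x_0) are always 0.\<close>

type_synonym ncs = "nat list \<Rightarrow> rat"

definition pos_word :: "nat list \<Rightarrow> bool" where
  "pos_word w \<longleftrightarrow> (\<forall>c\<in>set w. 1 \<le> c)"

text \<open>e_1 = p_1 = x_1 + x_2 + ...\<close>
definition e1 :: ncs where
  "e1 w = (if length w = 1 \<and> pos_word w then 1 else 0)"

text \<open>Unit interval graph given by the left endpoints a_1..a_n (vertices 1..n).\<close>
definition unit_interval_data :: "nat \<Rightarrow> (nat \<Rightarrow> nat) \<Rightarrow> bool" where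
  "unit_interval_data n a \<longleftrightarrow>
     (\<forall>k\<in>{1..n}. 1 \<le> a k \<and> a k \<le> k) \<and> (\<forall>k. 1 \<le> k \<and> k < n \<longrightarrow> a k \<le> a (Suc k))"

definition same_interval :: "nat \<Rightarrow> (nat \<Rightarrow> nat) \<Rightarrow> nat \<Rightarrow> nat \<Rightarrow> bool" where
  "same_interval n a i j \<longleftrightarrow> (\<exists>k\<in>{1..n}. i \<in> {a k..k} \<and> j \<in> {a k..k})"

definition uig_edge :: "nat \<Rightarrow> (nat \<Rightarrow> nat) \<Rightarrow> nat \<Rightarrow> nat \<Rightarrow> bool" where
  "uig_edge n a i j \<longleftrightarrow> i \<noteq> j \<and> same_interval n a i j"

text \<open>Chromatic symmetric function in non-commuting variables: coefficient of the
word x_{kappa(1)} ... x_{kappa(n)} is 1 iff kappa is a proper colouring.\<close>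
definition YG :: "nat \<Rightarrow> (nat \<Rightarrow> nat) \<Rightarrow> ncs" where
  "YG n a w = (if length w = n \<and> pos_word w \<and>
      (\<forall>i\<in>{1..n}. \<forall>j\<in>{1..n}. uig_edge n a i j \<longrightarrow> w ! (i - 1) \<noteq> w ! (j - 1))
     then 1 else 0)"

text \<open>Inducing f (homogeneous of degree m-1) to degree m: for j < m,
x_{i_1}..x_{i_{m-1}} goes to x_{i_1}..x_{i_{m-1}} x_{i_j}; for j = m, f goes to f p_1.\<close>
definition induce :: "nat \<Rightarrow> nat \<Rightarrow> ncs \<Rightarrow> ncs" where
  "induce m j f w =
     (if length w = m \<and> 1 \<le> m \<and> 1 \<le> last w \<and> (j = m \<or> last w = w ! (j - 1))
      then f (butlast w) else 0)"

definition arc_diagram :: "nat \<Rightarrow> (nat \<times> nat) set \<Rightarrow> bool" where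
  "arc_diagram n D \<longleftrightarrow> D \<subseteq> {(i, j). 1 \<le> i \<and> i < j \<and> j \<le> n} \<and>
     (\<forall>i i' j. (i, j) \<in> D \<and> (i', j) \<in> D \<longrightarrow> i = i')"

definition arcs_of :: "nat \<Rightarrow> (nat \<Rightarrow> nat) \<Rightarrow> (nat \<times> nat) set set" where
  "arcs_of n a = {D. arc_diagram n D \<and> (\<forall>(i, j)\<in>D. same_interval n a i j)}"

definition left_end :: "(nat \<times> nat) set \<Rightarrow> nat \<Rightarrow> nat" where
  "left_end D j = (if \<exists>i. (i, j) \<in> D then (THE i. (i, j) \<in> D) else j)"

text \<open>e_1 induced along D: e_1 \<up>_{i_2}^2 \<up>_{i_3}^3 ... \<up>_{i_n}^n\<close>
definition e1_induced :: "nat \<Rightarrow> (nat \<times> nat) set \<Rightarrow> ncs" where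
  "e1_induced n D = foldl (\<lambda>f m. induce m (left_end D m) f) e1 [2..<Suc n]"

end

theory Submission
  imports Defs
begin

lemma mono_a:
  assumes U: "unit_interval_data n a" and "1 \<le> k" "k \<le> k'" "k' \<le> n"
  shows "a k \<le> a k'"
  using assms(3,4)
proof (induction k' rule: dec_induct)
  case base then show ?case by simp
next
  case (step m)
  then have "a m \<le> a (Suc m)" using U assms(2) unfolding unit_interval_data_def by auto
  with step show ?case by simp
qed

lemma clique:
  assumes U: "unit_interval_data n a" and s1: "same_interval n a i j" and s2: "same_interval n a i' j"
    and "i \<le> j" "i' \<le> j"
  shows "same_interval n a i i'"
proof -
  obtain k where k: "k\<in>{1..n}" "i\<in>{a k..k}" "j\<in>{a k..k}" using s1 unfolding same_interval_def by auto
  obtain k' where k': "k'\<in>{1..n}" "i'\<in>{a k'..k'}" "j\<in>{a k'..k'}" using s2 unfolding same_interval_def by auto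
  show ?thesis
  proof (cases "k \<le> k'")
    case True
    then have "a k \<le> a k'" using mono_a[OF U] k k' by auto
    then show ?thesis unfolding same_interval_def using k k' assms by (intro bexI[of _ k]) auto
  next
    case False
    then have "a k' \<le> a k" using mono_a[OF U] k k' by auto
    then show ?thesis unfolding same_interval_def using k k' assms False by (intro bexI[of _ k']) auto
  qed
qed

lemma pos_word_snoc: "pos_word (v @ [x]) \<longleftrightarrow> pos_word v \<and> 1 \<le> x"
  unfolding pos_word_def by auto

lemma fold_char:
  assumes "1 \<le> k" and L: "\<forall>m. L m \<le> m"
  shows "foldl (\<lambda>f m. induce m (L m) f) e1 [2..<Suc k] w =
    (if length w = k \<and> pos_word w \<and> (\<forall>m\<in>{2..k}. L m = m \<or> w!(m-1) = w!(L m - 1)) then 1 else 0)"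
  using assms(1)
proof (induction k arbitrary: w rule: dec_induct)
  case base
  then show ?case by (simp add: e1_def)
next
  case (step k)
  have ups: "[2..<Suc (Suc k)] = [2..<Suc k] @ [Suc k]" using step by simp
  let ?F = "foldl (\<lambda>f m. induce m (L m) f) e1 [2..<Suc k]"
  have eq: "foldl (\<lambda>f m. induce m (L m) f) e1 [2..<Suc (Suc k)] w = induce (Suc k) (L (Suc k)) ?F w"
    unfolding ups by simp
  show ?case
  proof (cases "length w = Suc k")
    case False
    then show ?thesis unfolding eq induce_def using step(1) by simp
  next
    case True
    then obtain v x where w: "w = v @ [x]" 
      by (metis append_butlast_last_id length_0_conv nat.distinct(1))
    have lv: "length v = k" using True w by simp
    have h1: "\<forall>m\<in>{2..k}. (v@[x])!(m-1) = v!(m-1) \<and> (v@[x])!(L m - 1) = v!(L m - 1)"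
    proof
      fix m assume m: "m \<in> {2..k}"
      have "L m \<le> m" using L by simp
      then show "(v@[x])!(m-1) = v!(m-1) \<and> (v@[x])!(L m - 1) = v!(L m - 1)"
        using m lv by (auto simp: nth_append)
    qed
    have c: "(\<forall>m\<in>{2..Suc k}. L m = m \<or> w!(m-1) = w!(L m - 1)) \<longleftrightarrow>
       (\<forall>m\<in>{2..k}. L m = m \<or> v!(m-1) = v!(L m - 1)) \<and> (L (Suc k) = Suc k \<or> x = w!(L (Suc k) - 1))"
    proof -
      have s: "{2..Suc k} = {2..k} \<union> {Suc k}" using step by auto
      have "w!(Suc k - 1) = x" using w lv by (simp add: nth_append)
      then show ?thesis unfolding s using h1 w by auto
    qed
    define F where "F = ?F"
    have IH: "F v = (if length v = k \<and> pos_word v \<and> (\<forall>m\<in>{2..k}. L m = m \<or> v!(m-1) = v!(L m - 1)) then 1 else 0)"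
      unfolding F_def by (rule step.IH)
    have i2: "induce (Suc k) (L (Suc k)) F w = (if 1 \<le> x \<and> (L (Suc k) = Suc k \<or> x = w!(L (Suc k) - 1)) then F v else 0)"
      unfolding induce_def using w lv by auto
    show ?thesis
      unfolding eq F_def[symmetric] i2 IH c using True lv w pos_word_snoc by auto
  qed
qed

lemma left_end_arc:
  assumes "arc_diagram n D" "(i, j) \<in> D"
  shows "left_end D j = i"
  using assms unfolding left_end_def arc_diagram_def
  by (auto intro!: the_equality)

lemma left_end_le:
  assumes "arc_diagram n D"
  shows "left_end D m \<le> m"
proof (cases "\<exists>i. (i, m) \<in> D")
  case True
  then obtain i where i: "(i, m) \<in> D" by auto
  then have "left_end D m = i" using left_end_arc[OF assms] by simp
  moreover have "i < m" using i assms unfolding arc_diagram_def by auto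
  ultimately show ?thesis by simp
next
  case False
  then show ?thesis unfolding left_end_def by simp
qed

lemma e1_induced_char:
  assumes "1 \<le> n" "arc_diagram n D"
  shows "e1_induced n D w = (if length w = n \<and> pos_word w \<and>
      (\<forall>(i,j)\<in>D. w!(i-1) = w!(j-1)) then 1 else 0)"
proof -
  have fc: "e1_induced n D w = (if length w = n \<and> pos_word w \<and>
      (\<forall>m\<in>{2..n}. left_end D m = m \<or> w!(m-1) = w!(left_end D m - 1)) then 1 else 0)"
    unfolding e1_induced_def using fold_char[OF assms(1)] left_end_le[OF assms(2)] by blast
  have "(\<forall>m\<in>{2..n}. left_end D m = m \<or> w!(m-1) = w!(left_end D m - 1)) \<longleftrightarrow>
        (\<forall>(i,j)\<in>D. w!(i-1) = w!(j-1))"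
  proof
    assume A: "\<forall>m\<in>{2..n}. left_end D m = m \<or> w!(m-1) = w!(left_end D m - 1)"
    show "\<forall>(i,j)\<in>D. w!(i-1) = w!(j-1)"
    proof (clarify)
      fix i j assume ij: "(i, j) \<in> D"
      then have le: "left_end D j = i" using left_end_arc[OF assms(2)] by simp
      have "1 \<le> i \<and> i < j \<and> j \<le> n" using ij assms(2) unfolding arc_diagram_def by auto
      then have "j \<in> {2..n}" "i \<noteq> j" by auto
      then show "w!(i-1) = w!(j-1)" using A le by metis
    qed
  next
    assume B: "\<forall>(i,j)\<in>D. w!(i-1) = w!(j-1)"
    show "\<forall>m\<in>{2..n}. left_end D m = m \<or> w!(m-1) = w!(left_end D m - 1)"
    proof
      fix m assume "m \<in> {2..n}"
      show "left_end D m = m \<or> w!(m-1) = w!(left_end D m - 1)"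
      proof (cases "\<exists>i. (i, m) \<in> D")
        case True
        then obtain i where i: "(i, m) \<in> D" by auto
        then show ?thesis using left_end_arc[OF assms(2) i] B by auto
      next
        case False then show ?thesis unfolding left_end_def by simp
      qed
    qed
  qed
  then show ?thesis using fc by simp
qed


lemma arcs_finite: "finite (arcs_of n a)"
proof (rule finite_subset)
  show "arcs_of n a \<subseteq> Pow ({1..n} \<times> {1..n})"
    unfolding arcs_of_def arc_diagram_def by auto
qed auto

lemma sum_zero_inv:
  fixes S :: "(nat \<times> nat) set set"
  assumes fin: "finite S" and allfin: "\<forall>D\<in>S. finite D"
    and ins: "\<forall>D\<in>S. e \<notin> D \<longrightarrow> insert e D \<in> S"
    and del: "\<forall>D\<in>S. e \<in> D \<longrightarrow> D - {e} \<in> S"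
  shows "(\<Sum>D\<in>S. (-1::rat) ^ card D) = 0"
proof -
  let ?S1 = "{D\<in>S. e \<in> D}" and ?S2 = "{D\<in>S. e \<notin> D}"
  have SU: "S = ?S1 \<union> ?S2" by auto
  have split: "(\<Sum>D\<in>S. (-1::rat) ^ card D) = (\<Sum>D\<in>?S1. (-1::rat) ^ card D) + (\<Sum>D\<in>?S2. (-1::rat) ^ card D)"
  proof -
    have "(\<Sum>D\<in>S. (-1::rat) ^ card D) = (\<Sum>D\<in>?S1 \<union> ?S2. (-1::rat) ^ card D)"
      using SU by (rule arg_cong)
    also have "\<dots> = (\<Sum>D\<in>?S1. (-1::rat) ^ card D) + (\<Sum>D\<in>?S2. (-1::rat) ^ card D)"
      by (rule sum.union_disjoint) (use fin in auto)
    finally show ?thesis .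
  qed
  have img: "?S1 = insert e ` ?S2"
  proof
    show "?S1 \<subseteq> insert e ` ?S2"
    proof
      fix D assume "D \<in> ?S1"
      then have "D - {e} \<in> ?S2" "D = insert e (D - {e})" using del by auto
      then show "D \<in> insert e ` ?S2" by blast
    qed
  qed (use ins in auto)
  have inj: "inj_on (insert e) ?S2"
  proof (rule inj_onI)
    fix x y assume "x \<in> ?S2" "y \<in> ?S2" "insert e x = insert e y"
    then have "insert e x - {e} = insert e y - {e}" "e \<notin> x" "e \<notin> y" by auto
    then show "x = y" by simp
  qed
  have "(\<Sum>D\<in>?S1. (-1::rat) ^ card D) = (\<Sum>D\<in>?S2. (-1::rat) ^ card (insert e D))"
    unfolding img by (rule sum.reindex[OF inj, unfolded comp_def])
  also have "\<dots> = (\<Sum>D\<in>?S2. - ((-1::rat) ^ card D))"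
    by (rule sum.cong) (use allfin in auto)
  also have "\<dots> = - (\<Sum>D\<in>?S2. (-1::rat) ^ card D)" by (simp add: sum_negf)
  finally show ?thesis using split by simp
qed

theorem mainTheorem3:
  fixes n :: nat and a :: "nat \<Rightarrow> nat"
  assumes "1 \<le> n" and "unit_interval_data n a"
  shows "YG n a = (\<lambda>w. \<Sum>D\<in>arcs_of n a. (-1) ^ card D * e1_induced n D w)"
proof (rule ext)
  fix w :: "nat list"
  note U = assms(2)
  let ?A = "arcs_of n a"
  define Q where "Q D \<longleftrightarrow> (\<forall>(i,j)\<in>D. w!(i-1) = w!(j-1))" for D :: "(nat \<times> nat) set"
  have ei: "e1_induced n D w = (if length w = n \<and> pos_word w \<and> Q D then 1 else 0)" if "D \<in> ?A" for D
    using e1_induced_char[OF assms(1)] that unfolding arcs_of_def Q_def by auto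
  show "YG n a w = (\<Sum>D\<in>?A. (-1) ^ card D * e1_induced n D w)"
  proof (cases "length w = n \<and> pos_word w")
    case False
    then show ?thesis using ei unfolding YG_def by auto
  next
    case True
    have "(\<Sum>D\<in>?A. (-1) ^ card D * e1_induced n D w) = (\<Sum>D\<in>?A. if Q D then (-1) ^ card D else 0)"
      by (rule sum.cong) (use ei True in auto)
    also have "\<dots> = (\<Sum>D\<in>{D\<in>?A. Q D}. (-1::rat) ^ card D)"
      using arcs_finite by (simp add: sum.inter_filter)
    finally have R: "(\<Sum>D\<in>?A. (-1) ^ card D * e1_induced n D w) = (\<Sum>D\<in>{D\<in>?A. Q D}. (-1::rat) ^ card D)" .
    show ?thesis
    proof (cases "\<forall>i\<in>{1..n}. \<forall>j\<in>{1..n}. uig_edge n a i j \<longrightarrow> w ! (i - 1) \<noteq> w ! (j - 1)")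
      case pr: True
      have "{D\<in>?A. Q D} = {{}}"
      proof
        show "{D\<in>?A. Q D} \<subseteq> {{}}"
        proof
          fix D assume D: "D \<in> {D\<in>?A. Q D}"
          have "D = {}"
          proof (rule ccontr)
            assume "D \<noteq> {}"
            then obtain i j where ij: "(i, j) \<in> D" by auto
            have si: "same_interval n a i j" "1 \<le> i" "i < j" "j \<le> n"
              using D ij unfolding arcs_of_def arc_diagram_def by auto
            have "w!(i-1) = w!(j-1)" using D ij unfolding Q_def by auto
            moreover have "uig_edge n a i j" using si unfolding uig_edge_def by auto
            ultimately show False using pr si by auto
          qed
          then show "D \<in> {{}}" by simp
        qed
      next
        show "{{}} \<subseteq> {D\<in>?A. Q D}"
          unfolding arcs_of_def arc_diagram_def Q_def by auto
      qed
      then show ?thesis using R True pr unfolding YG_def by simp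
    next
      case nprop: False
      then obtain i j where ij: "i \<in> {1..n}" "j \<in> {1..n}" "uig_edge n a i j" "w!(i-1) = w!(j-1)"
        by auto
      define M where "M = {(i, j). i < j \<and> same_interval n a i j \<and> w!(i-1) = w!(j-1)}"
      have "(min i j, max i j) \<in> M"
        using ij unfolding M_def uig_edge_def same_interval_def
        by (cases "i < j") (auto simp: min_def max_def)
      then obtain ii jj where iijj: "(ii, jj) \<in> M" by blast
      define j0 where "j0 = (LEAST j. \<exists>i. (i, j) \<in> M)"
      have "\<exists>i. (i, j0) \<in> M" unfolding j0_def by (rule LeastI[of _ jj]) (use iijj in blast)
      then obtain i0 where i0: "(i0, j0) \<in> M" by auto
      have least: "\<not> (\<exists>i. (i, j) \<in> M)" if "j < j0" for j
        using that unfolding j0_def using not_less_Least by blast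
      have uniq: "i = i0" if "(i, j0) \<in> M" for i
      proof (rule ccontr)
        assume ne: "i \<noteq> i0"
        have a1: "same_interval n a i j0" "i < j0" "w!(i-1) = w!(j0-1)" using that unfolding M_def by auto
        have a2: "same_interval n a i0 j0" "i0 < j0" "w!(i0-1) = w!(j0-1)" using i0 unfolding M_def by auto
        have sc: "same_interval n a i i0" using clique[OF U a1(1) a2(1)] a1 a2 by simp
        have sc': "same_interval n a i0 i" using sc unfolding same_interval_def by auto
        show False
        proof (cases "i < i0")
          case True
          then have "(i, i0) \<in> M" unfolding M_def using sc a1 a2 by auto
          then show False using least[of i0] a2 by auto
        next
          case False
          then have "(i0, i) \<in> M" unfolding M_def using sc' a1 a2 ne by auto
          then show False using least[of i] a1 by auto
        qed
      qed
      let ?e = "(i0, j0)"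
      have e: "same_interval n a i0 j0" "i0 < j0" "w!(i0-1) = w!(j0-1)" using i0 unfolding M_def by auto
      obtain kk where kk: "kk \<in> {1..n}" "i0 \<in> {a kk..kk}" "j0 \<in> {a kk..kk}" using e(1) unfolding same_interval_def by blast
      have "1 \<le> a kk" using kk(1) U unfolding unit_interval_data_def by blast
      then have ebd: "1 \<le> i0" "j0 \<le> n" using kk by auto
      have "(\<Sum>D\<in>{D\<in>?A. Q D}. (-1::rat) ^ card D) = 0"
      proof (rule sum_zero_inv)
        show "finite {D\<in>?A. Q D}" using arcs_finite by simp
        show "\<forall>D\<in>{D\<in>?A. Q D}. finite D"
        proof
          fix D assume "D \<in> {D\<in>?A. Q D}"
          then have "D \<subseteq> {1..n} \<times> {1..n}" unfolding arcs_of_def arc_diagram_def by auto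
          then show "finite D" by (rule finite_subset) auto
        qed
        show "\<forall>D\<in>{D\<in>?A. Q D}. ?e \<in> D \<longrightarrow> D - {?e} \<in> {D\<in>?A. Q D}"
          unfolding arcs_of_def arc_diagram_def Q_def by auto
        show "\<forall>D\<in>{D\<in>?A. Q D}. ?e \<notin> D \<longrightarrow> insert ?e D \<in> {D\<in>?A. Q D}"
        proof (intro ballI impI)
          fix D assume D: "D \<in> {D\<in>?A. Q D}" and nD: "?e \<notin> D"
          have left: "i = i0" if "(i, j0) \<in> D" for i
          proof -
            have "i < j0" "same_interval n a i j0" using D that unfolding arcs_of_def arc_diagram_def by auto
            moreover have "w!(i-1) = w!(j0-1)" using D that unfolding Q_def by auto
            ultimately show ?thesis using uniq unfolding M_def by auto
          qed
          show "insert ?e D \<in> {D\<in>?A. Q D}"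
            using D e ebd left unfolding arcs_of_def arc_diagram_def Q_def by (auto, blast)
        qed
      qed
      moreover have "YG n a w = 0" using nprop unfolding YG_def by auto
      ultimately show ?thesis using R by simp
    qed
  qed
qed

end
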